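(* Let $n\ge 9$ be odd and let $k$ be even with $4\le k<n$. Then $\mu(C(k,n))=k$.
   Context: For even $k$, the circulant $C(k,n)$ is the graph on vertex set $\{1,\dots,n\}$ in which distinct $i<j$ are adjacent iff $\min(j-i,\ i+n-j)\le k/2$. For a simple graph $G=(V,E)$ on $n$ vertices, a fractional vertex cover is a function $f:V\to[0,\infty)$ with $f(u)+f(v)\ge 1$ for every edge $uv$; $\tau^*(G)$ is the minimum of $\sum_v f(v)$ over these. For $E'\subseteq E$ let $G-E'=(V,E\setminus E')$, and $\mu(G)=\min\{|E'|: E'\subseteq E,\ \tau^*(G-E')<n/2\}$ (equivalently, the minimum number of edges whose deletion leaves no spanning subgraph whose components are all $K_2$'s or odd cycles). *)

theory Defs
  imports Complex_Main
begin

definition circulant_edges :: "nat \<Rightarrow> nat \<Rightarrow> nat set set" where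
  "circulant_edges k n =
     {{i, j} | i j. 1 \<le> i \<and> i < j \<and> j \<le> n \<and> min (j - i) (i + n - j) \<le> k div 2}"

definition frac_vertex_cover :: "nat set \<Rightarrow> nat set set \<Rightarrow> (nat \<Rightarrow> real) \<Rightarrow> bool" where
  "frac_vertex_cover V E f \<longleftrightarrow>
     (\<forall>v\<in>V. 0 \<le> f v) \<and> (\<forall>u v. {u, v} \<in> E \<longrightarrow> f u + f v \<ge> 1)"

definition tau_star :: "nat set \<Rightarrow> nat set set \<Rightarrow> real" where
  "tau_star V E = Inf {(\<Sum>v\<in>V. f v) | f. frac_vertex_cover V E f}"

definition mu :: "nat set \<Rightarrow> nat set set \<Rightarrow> nat" where
  "mu V E = (LEAST m. \<exists>E'. E' \<subseteq> E \<and> card E' = m \<and> tau_star V (E - E') < real (card V) / 2)"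

end

theory Submission
  imports Defs
begin
lemma edge_nat:
  fixes n d u l :: nat
  assumes "2*d < n" "u < n" "1 \<le> l" "l \<le> d"
  shows "{u+1, (u+l) mod n + 1} \<in> circulant_edges (2*d) n"
proof (cases "u + l < n")
  case True
  then have m: "(u+l) mod n = u + l" by simp
  show ?thesis unfolding circulant_edges_def m
    apply (rule CollectI)
    apply (rule exI[of _ "u+1"], rule exI[of _ "u+l+1"])
    using assms True by auto
next
  case False
  then have m: "(u+l) mod n = u + l - n" using assms
    by (simp add: le_mod_geq)
  show ?thesis unfolding circulant_edges_def m
    apply (rule CollectI)
    apply (rule exI[of _ "u+l-n+1"], rule exI[of _ "u+1"])
    using assms False by auto
qed



lemma pairs_sum:
  fixes x :: "nat \<Rightarrow> real"
  assumes "\<And>r. m \<le> r \<Longrightarrow> r + 1 < m + 2*t \<Longrightarrow> x r + x (r+1) \<ge> 1"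
  shows "(\<Sum>r\<in>{m..<m+2*t}. x r) \<ge> real t"
  using assms
proof (induction t)
  case 0
  then show ?case by simp
next
  case (Suc t)
  have IH: "(\<Sum>r\<in>{m..<m+2*t}. x r) \<ge> real t"
    using Suc.prems by (intro Suc.IH) auto
  have e: "{m..<m+2*Suc t} = {m..<m+2*t} \<union> {m+2*t, m+2*t+1}" by auto
  have "(\<Sum>r\<in>{m..<m+2*Suc t}. x r) = (\<Sum>r\<in>{m..<m+2*t}. x r) + (x (m+2*t) + x (m+2*t+1))"
    unfolding e by (subst sum.union_disjoint) auto
  moreover have "x (m+2*t) + x (m+2*t+1) \<ge> 1" using Suc.prems[of "m+2*t"] by auto
  ultimately show ?case using IH by simp
qed

lemma cycle_sum:
  fixes x :: "nat \<Rightarrow> real"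
  assumes "p \<le> q"
  shows "2 * (\<Sum>r\<in>{p..q}. x r) = (\<Sum>r\<in>{p..<q}. x r + x (r+1)) + x p + x q"
  using assms
proof (induction q)
  case 0
  then show ?case by simp
next
  case (Suc q)
  show ?case
  proof (cases "p = Suc q")
    case True
    then show ?thesis by simp
  next
    case False
    then have pq: "p \<le> q" using Suc.prems by simp
    have "{p..Suc q} = insert (Suc q) {p..q}" using pq by auto
    then have a: "(\<Sum>r\<in>{p..Suc q}. x r) = x (Suc q) + (\<Sum>r\<in>{p..q}. x r)" by simp
    have "{p..<Suc q} = insert q {p..<q}" using pq by auto
    then have b: "(\<Sum>r\<in>{p..<Suc q}. x r + x (r+1)) = (x q + x (Suc q)) + (\<Sum>r\<in>{p..<q}. x r + x (r+1))" by simp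
    show ?thesis using Suc.IH[OF pq] a b by simp
  qed
qed

lemma cycle_ge:
  fixes x :: "nat \<Rightarrow> real"
  assumes "p \<le> q" and "\<And>r. p \<le> r \<Longrightarrow> r < q \<Longrightarrow> x r + x (r+1) \<ge> 1" and "x p + x q \<ge> 1"
  shows "2 * (\<Sum>r\<in>{p..q}. x r) \<ge> real (q - p) + 1"
proof -
  have "(\<Sum>r\<in>{p..<q}. x r + x (r+1)) \<ge> (\<Sum>r\<in>{p..<q}. 1)"
    by (rule sum_mono) (use assms(2) in auto)
  then show ?thesis using cycle_sum[OF assms(1), of x] assms(3) by simp
qed

lemma seq_chord:
  fixes x :: "nat \<Rightarrow> real"
  assumes "odd c" "p < q" "q < c" "even p" "even q"
    and cons: "\<And>r. r + 1 < c \<Longrightarrow> x r + x (r+1) \<ge> 1" and ch: "x p + x q \<ge> 1"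
  shows "2 * (\<Sum>r<c. x r) \<ge> real c"
proof -
  obtain t1 where t1: "p = 2*t1" using assms(4) by auto
  obtain t2 where t2: "c = q + 1 + 2*t2" using assms(1,3,5)
    by (metis add.commute dvd_def even_add le_add_diff_inverse2 less_eq_Suc_le odd_one Suc_eq_plus1 ) 
  have s1: "(\<Sum>r\<in>{0..<0+2*t1}. x r) \<ge> real t1"
    by (rule pairs_sum) (use cons assms t1 in auto)
  have s2: "2 * (\<Sum>r\<in>{p..q}. x r) \<ge> real (q - p) + 1"
    by (rule cycle_ge) (use cons assms in auto)
  have s3: "(\<Sum>r\<in>{(q+1)..<(q+1)+2*t2}. x r) \<ge> real t2"
    by (rule pairs_sum) (use cons t2 in auto)
  have split: "{..<c} = {0..<p} \<union> {p..q} \<union> {(q+1)..<(q+1)+2*t2}" using t2 assms by auto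
  have "(\<Sum>r<c. x r) = (\<Sum>r\<in>{0..<p}. x r) + (\<Sum>r\<in>{p..q}. x r) + (\<Sum>r\<in>{(q+1)..<(q+1)+2*t2}. x r)"
  proof -
    have "sum x ({0..<p} \<union> {p..q} \<union> {(q+1)..<(q+1)+2*t2}) = sum x ({0..<p} \<union> {p..q}) + sum x {(q+1)..<(q+1)+2*t2}"
      by (rule sum.union_disjoint) (use assms(2) in auto)
    moreover have "sum x ({0..<p} \<union> {p..q}) = sum x {0..<p} + sum x {p..q}"
      by (rule sum.union_disjoint) auto
    ultimately show ?thesis unfolding split by simp
  qed
  then show ?thesis using s1 s2 s3 t1 t2 assms(2) by simp
qed

lemma seq_single:
  fixes x :: "nat \<Rightarrow> real"
  assumes "odd c" "p < c" "even p"
    and cons: "\<And>r. r + 1 < c \<Longrightarrow> x r + x (r+1) \<ge> 1"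
  shows "2 * (\<Sum>r<c. x r) \<ge> real c - 1 + 2 * x p"
proof -
  obtain t1 where t1: "p = 2*t1" using assms(3) by auto
  obtain t2 where t2: "c = p + 1 + 2*t2" using assms(1,2,3)
    by (metis add.commute dvd_def even_add le_add_diff_inverse2 less_eq_Suc_le odd_one Suc_eq_plus1 ) 
  have s1: "(\<Sum>r\<in>{0..<0+2*t1}. x r) \<ge> real t1"
    by (rule pairs_sum) (use cons assms t1 in auto)
  have s3: "(\<Sum>r\<in>{(p+1)..<(p+1)+2*t2}. x r) \<ge> real t2"
    by (rule pairs_sum) (use cons t2 in auto)
  have split: "{..<c} = {0..<p} \<union> {p} \<union> {(p+1)..<(p+1)+2*t2}" using t2 assms by auto
  have "(\<Sum>r<c. x r) = (\<Sum>r\<in>{0..<p}. x r) + x p + (\<Sum>r\<in>{(p+1)..<(p+1)+2*t2}. x r)"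
    unfolding split
    by (subst sum.union_disjoint, simp, simp, force)+ simp
  then show ?thesis using s1 s3 t1 t2 by simp
qed





lemma int_dvd_small:
  assumes "(N::int) dvd x" "\<bar>x\<bar> < N" shows "x = 0"
proof (rule ccontr)
  assume "x \<noteq> 0"
  then have "\<bar>N\<bar> \<le> \<bar>x\<bar>" using assms(1) by (rule dvd_imp_le_int)
  then show False using assms(2) by linarith
qed

locale circ =
  fixes n d :: nat and E' :: "nat set set" and f :: "nat \<Rightarrow> real"
  assumes nodd: "odd n" and d2: "2 \<le> d" and dn: "2*d < n" and n9: "9 \<le> n"
    and cover: "\<And>u v. {u,v} \<in> circulant_edges (2*d) n \<Longrightarrow> {u,v} \<notin> E' \<Longrightarrow> 1 \<le> f u + f v"
    and finE: "finite E'" and cardE: "card E' < 2*d"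
begin

definition F :: "int \<Rightarrow> real" where "F x = f (nat (x mod int n) + 1)"
definition ed :: "int \<Rightarrow> nat \<Rightarrow> nat set" where
  "ed x l = {nat (x mod int n) + 1, (nat (x mod int n) + l) mod n + 1}"
definition Dl :: "nat \<Rightarrow> int set" where "Dl l = {x \<in> {0..<int n}. ed x l \<in> E'}"

lemma npos: "0 < n" using n9 by simp

lemma F_cong: "x mod int n = y mod int n \<Longrightarrow> F x = F y" by (simp add: F_def)
lemma ed_cong: "x mod int n = y mod int n \<Longrightarrow> ed x l = ed y l" by (simp add: ed_def)

lemma nat_mod_add: "nat ((x + int l) mod int n) = (nat (x mod int n) + l) mod n"
proof -
  have "(x + int l) mod int n = (x mod int n + int l) mod int n" by (simp add: mod_add_left_eq)
  also have "x mod int n = int (nat (x mod int n))" using npos by simp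
  finally have "(x + int l) mod int n = int ((nat (x mod int n) + l) mod n)"
    by (metis of_nat_add of_nat_mod)
  then show ?thesis by simp
qed

lemma F_add: "F (x + int l) = f ((nat (x mod int n) + l) mod n + 1)"
  using nat_mod_add by (simp add: F_def)

lemma ed_E: "1 \<le> l \<Longrightarrow> l \<le> d \<Longrightarrow> ed x l \<in> circulant_edges (2*d) n"
proof -
  assume "1 \<le> l" "l \<le> d"
  moreover have "nat (x mod int n) < n" using npos by (simp add: nat_less_iff)
  ultimately show ?thesis unfolding ed_def by (intro edge_nat) (use dn in auto)
qed

lemma pair: "1 \<le> l \<Longrightarrow> l \<le> d \<Longrightarrow> ed x l \<notin> E' \<Longrightarrow> 1 \<le> F x + F (x + int l)"
proof -
  assume a: "1 \<le> l" "l \<le> d" "ed x l \<notin> E'"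
  have "1 \<le> f (nat (x mod int n) + 1) + f ((nat (x mod int n) + l) mod n + 1)"
    using cover[of "nat (x mod int n) + 1" "(nat (x mod int n) + l) mod n + 1"] ed_E[OF a(1,2), of x] a(3)
    unfolding ed_def by blast
  then show ?thesis unfolding F_add by (simp add: F_def)
qed

lemma sumF: "(\<Sum>v\<in>{1..n}. f v) = (\<Sum>x\<in>{0..<int n}. F x)"
  by (rule sum.reindex_bij_witness[where i="\<lambda>x. nat x + 1" and j="\<lambda>v. int v - 1"])
     (auto simp: F_def intro!: arg_cong[where f=f])

lemma ed_inj:
  assumes "1 \<le> l" "l \<le> d" "1 \<le> l'" "l' \<le> d" "x \<in> {0..<int n}" "x' \<in> {0..<int n}"
    and eq: "ed x l = ed x' l'"
  shows "l = l' \<and> x = x'"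
proof -
  define u where "u = nat x"
  define u' where "u' = nat x'"
  have xu: "x = int u" "x' = int u'" using assms(5,6) by (auto simp: u_def u'_def)
  have un: "u < n" "u' < n" using assms(5,6) xu by auto
  have "{u+1, (u+l) mod n + 1} = {u'+1, (u'+l') mod n + 1}"
    using eq un by (simp add: ed_def xu)
  then have "(u = u' \<and> (u+l) mod n = (u'+l') mod n) \<or> (u = (u'+l') mod n \<and> (u+l) mod n = u')"
    by (auto simp: doubleton_eq_iff)
  then show ?thesis
  proof
    assume h: "u = u' \<and> (u+l) mod n = (u'+l') mod n"
    then have "(u + l) mod n = (u + l') mod n" by metis
    then have "int ((u + l) mod n) = int ((u + l') mod n)" by simp
    then have "(x + int l) mod int n = (x + int l') mod int n" by (simp add: xu of_nat_mod)
    then have "int n dvd (x + int l) - (x + int l')" by (simp add: mod_eq_dvd_iff)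
    then have "int n dvd int l - int l'" by simp
    moreover have "\<bar>int l - int l'\<bar> < int n" using assms dn by auto
    ultimately have "l = l'" using int_dvd_small by fastforce
    then show ?thesis using h xu by simp
  next
    assume h: "u = (u'+l') mod n \<and> (u+l) mod n = u'"
    then have "int u = int ((u'+l') mod n)" "int ((u+l) mod n) = int u'" by (metis, metis)
    then have "x mod int n = (x' + int l') mod int n" "(x + int l) mod int n = x' mod int n"
      using un by (simp_all add: xu of_nat_mod)
    then have "int n dvd x - (x' + int l')" "int n dvd (x + int l) - x'"
      by (simp_all add: mod_eq_dvd_iff)
    then have "int n dvd (x - (x' + int l')) - ((x + int l) - x')" by (rule dvd_diff)
    moreover have "(x - (x' + int l')) - ((x + int l) - x') = - (int l + int l')" by simp
    ultimately have "int n dvd (int l + int l')" by (metis dvd_minus_iff)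
    moreover have "\<bar>int l + int l'\<bar> < int n" "int l + int l' \<noteq> 0" using assms dn by auto
    ultimately show ?thesis using int_dvd_small by blast
  qed
qed

lemma Dl_fin: "finite (Dl l)"
  unfolding Dl_def by (rule finite_subset[of _ "{0..<int n}"]) auto

lemma Dl_sum: "(\<Sum>l\<in>{1..d}. card (Dl l)) \<le> card E'"
proof -
  have "(\<Sum>l\<in>{1..d}. card (Dl l)) = card (Sigma {1..d} Dl)"
    by (rule card_SigmaI[symmetric]) (auto simp: Dl_fin)
  also have "\<dots> \<le> card E'"
  proof (rule card_inj_on_le[where f="\<lambda>(l,x). ed x l"])
    show "inj_on (\<lambda>(l, x). ed x l) (Sigma {1..d} Dl)"
      unfolding inj_on_def Dl_def using ed_inj by auto
    show "(\<lambda>(l, x). ed x l) ` Sigma {1..d} Dl \<subseteq> E'" unfolding Dl_def by auto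
    show "finite E'" by (rule finE)
  qed
  finally show ?thesis .
qed

lemma closed_sum:
  assumes A: "A \<subseteq> {0..<int n}" and cl: "\<And>y. y \<in> A \<Longrightarrow> (y + int j) mod int n \<in> A"
    and nd: "\<And>y. y \<in> A \<Longrightarrow> ed y j \<notin> E'" and j: "1 \<le> j" "j \<le> d"
  shows "2 * (\<Sum>y\<in>A. F y) \<ge> real (card A)"
proof -
  have finA: "finite A" using A finite_subset by blast
  have inj: "inj_on (\<lambda>y. (y + int j) mod int n) A"
  proof (rule inj_onI)
    fix x y assume "x \<in> A" "y \<in> A" "(x + int j) mod int n = (y + int j) mod int n"
    then have "int n dvd x - y" by (simp add: mod_eq_dvd_iff)
    moreover have "x \<in> {0..<int n}" "y \<in> {0..<int n}" using \<open>x \<in> A\<close> \<open>y \<in> A\<close> A by auto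
    then have "\<bar>x - y\<bar> < int n" by auto
    ultimately show "x = y" using int_dvd_small by fastforce
  qed
  have img: "(\<lambda>y. (y + int j) mod int n) ` A = A"
    by (rule endo_inj_surj[OF finA]) (use cl inj in auto)
  have "(\<Sum>y\<in>A. F ((y + int j) mod int n)) = (\<Sum>y\<in>A. F y)"
    using sum.reindex[OF inj, of F] img by simp
  then have s: "(\<Sum>y\<in>A. F (y + int j)) = (\<Sum>y\<in>A. F y)"
    by (simp add: F_def)
  have "(\<Sum>y\<in>A. 1) \<le> (\<Sum>y\<in>A. F y + F (y + int j))"
    by (rule sum_mono) (use pair nd j in auto)
  then show ?thesis using s by (simp add: sum.distrib)
qed

end



lemma key0:
  fixes n j c :: nat
  assumes j1: "1 \<le> j" and c_def: "c = n div gcd n j"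
  shows "int n dvd r * int j \<longleftrightarrow> int c dvd r"
proof -
  define g where "g = gcd n j"
  define j' where "j' = j div g"
  have gpos: "0 < g" using j1 by (simp add: g_def)
  have n_eq: "n = g * c" unfolding c_def g_def by simp
  have j_eq: "j = g * j'" unfolding j'_def g_def by simp
  have cop: "coprime c j'" unfolding c_def j'_def g_def
    by (rule div_gcd_coprime) (use j1 in auto)
  have e1: "int n = int g * int c" using n_eq by simp
  have e2: "r * int j = int g * (r * int j')" using j_eq by simp
  have "int n dvd r * int j \<longleftrightarrow> int g * int c dvd int g * (r * int j')"
    unfolding e1 e2 ..
  also have "\<dots> \<longleftrightarrow> int c dvd r * int j'" using gpos by (intro dvd_times_left_cancel_iff) simp
  also have "\<dots> \<longleftrightarrow> int c dvd r"
  proof -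
    have "coprime (int c) (int j')" using cop by simp
    then show ?thesis by (rule coprime_dvd_mult_left_iff)
  qed
  finally show ?thesis .
qed

locale cj = circ +
  fixes j :: nat and a :: int
  assumes j1: "1 \<le> j" and jd: "j \<le> d" and Dla: "Dl j = {a}"
    and small: "(\<Sum>v\<in>{1..n}. f v) < real n / 2"
begin

definition b :: int where "b = a + int j"
definition c :: nat where "c = n div gcd n j"
definition pt :: "nat \<Rightarrow> int" where "pt r = b + int r * int j"
definition inCo :: "int \<Rightarrow> int \<Rightarrow> bool" where
  "inCo w y \<longleftrightarrow> (\<exists>r::int. int n dvd (y - w - r * int j))"
definition Co :: "int \<Rightarrow> int set" where "Co w = {y \<in> {0..<int n}. inCo w y}"

lemma ed_mod: "ed (x mod int n) l = ed x l" by (simp add: ed_def)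

lemma a_range: "0 \<le> a" "a < int n" and a_E: "ed a j \<in> E'"
  using Dla unfolding Dl_def by auto

lemma jn: "j < n" using jd dn d2 by simp

lemma key: "int n dvd r * int j \<longleftrightarrow> int c dvd r"
  by (rule key0[OF j1 c_def])

lemma c_dvd: "c dvd n"
proof -
  have "n = gcd n j * c" unfolding c_def by simp
  then show ?thesis by (metis dvd_triv_right)
qed

lemma c_odd: "odd c" using c_dvd nodd dvd_trans[of 2 c n] by auto

lemma c_pos: "0 < c" using c_dvd npos by (cases "c = 0") auto

lemma c_ge3: "3 \<le> c"
proof -
  have "c \<noteq> 1"
  proof
    assume "c = 1"
    then have "int c dvd 1" by simp
    then have "int n dvd 1 * int j" using key by blast
    then have "n dvd j" by simp
    then show False using jn j1 by (simp add: nat_dvd_not_less)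
  qed
  then show ?thesis using c_odd c_pos by presburger
qed

lemma cj0: "int n dvd int c * int j" using key by simp

lemma pt_cong: "int n dvd (pt r - pt r') \<longleftrightarrow> int c dvd (int r - int r')"
proof -
  have "pt r - pt r' = (int r - int r') * int j" by (simp add: pt_def algebra_simps)
  then show ?thesis using key by simp
qed

lemma small_dvd: "int c dvd x \<Longrightarrow> \<bar>x\<bar> < int c \<Longrightarrow> x = 0"
  by (rule int_dvd_small)

lemma Co_sub: "Co w \<subseteq> {0..<int n}" by (auto simp: Co_def)

lemma Co_sum: "(\<Sum>y\<in>Co w. F y) = (\<Sum>r<c. F (w + int r * int j))" and Co_card: "card (Co w) = c"
proof -
  define h where "h r = (w + int r * int j) mod int n" for r :: nat
  have inj: "inj_on h {..<c}"
  proof (rule inj_onI)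
    fix r r' assume rr: "r \<in> {..<c}" "r' \<in> {..<c}" "h r = h r'"
    then have "int n dvd (w + int r * int j) - (w + int r' * int j)"
      by (simp add: h_def mod_eq_dvd_iff)
    then have "int n dvd (int r - int r') * int j" by (simp add: algebra_simps)
    then have "int c dvd (int r - int r')" using key by blast
    moreover have "\<bar>int r - int r'\<bar> < int c" using rr by auto
    ultimately show "r = r'" using small_dvd by fastforce
  qed
  have img: "h ` {..<c} = Co w"
  proof
    show "h ` {..<c} \<subseteq> Co w"
    proof
      fix y assume "y \<in> h ` {..<c}"
      then obtain r where r: "y = h r" by auto
      have "int n dvd (w + int r * int j) mod int n - (w + int r * int j)"
        by (simp only: mod_eq_dvd_iff[symmetric]) simp
      then have "int n dvd y - w - int r * int j"
        unfolding r h_def by (simp add: algebra_simps)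
      moreover have "y \<in> {0..<int n}" unfolding r h_def using npos by auto
      ultimately show "y \<in> Co w" unfolding Co_def inCo_def by blast
    qed
  next
    show "Co w \<subseteq> h ` {..<c}"
    proof
      fix y assume y: "y \<in> Co w"
      then obtain r0 where r0: "int n dvd (y - w - r0 * int j)" "0 \<le> y" "y < int n"
        unfolding Co_def inCo_def by auto
      define r where "r = nat (r0 mod int c)"
      have rc: "r < c" unfolding r_def using c_pos by (simp add: nat_less_iff)
      have "int c dvd (r0 - int r)" unfolding r_def using c_pos
        by (simp add: mod_eq_dvd_iff[symmetric])
      then have "int n dvd (r0 - int r) * int j" using key by blast
      then have "int n dvd (y - w - r0 * int j) + (r0 - int r) * int j" using r0(1) by (rule dvd_add[rotated])
      then have "int n dvd y - (w + int r * int j)" by (simp add: algebra_simps)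
      then have "y mod int n = (w + int r * int j) mod int n" by (simp add: mod_eq_dvd_iff)
      then have "y = h r" unfolding h_def using r0 by simp
      then show "y \<in> h ` {..<c}" using rc by auto
    qed
  qed
  show "card (Co w) = c" using card_image[OF inj] img by simp
  have "(\<Sum>y\<in>Co w. F y) = (\<Sum>r<c. F (h r))"
    using sum.reindex[OF inj, of F] img by simp
  also have "\<dots> = (\<Sum>r<c. F (w + int r * int j))"
    by (rule sum.cong) (auto simp: h_def F_def)
  finally show "(\<Sum>y\<in>Co w. F y) = (\<Sum>r<c. F (w + int r * int j))" .
qed

lemma inCo_shift: "inCo w ((y + int j) mod int n) \<longleftrightarrow> inCo w y"
proof
  assume "inCo w ((y + int j) mod int n)"
  then obtain r where "int n dvd ((y + int j) mod int n - w - r * int j)" unfolding inCo_def by auto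
  moreover have "int n dvd (y + int j) - (y + int j) mod int n"
    by (simp only: mod_eq_dvd_iff[symmetric]) simp
  ultimately have "int n dvd ((y + int j) mod int n - w - r * int j) + ((y + int j) - (y + int j) mod int n)"
    by (rule dvd_add)
  then have "int n dvd y - w - (r - 1) * int j" by (simp add: algebra_simps)
  then show "inCo w y" unfolding inCo_def by blast
next
  assume "inCo w y"
  then obtain r where "int n dvd (y - w - r * int j)" unfolding inCo_def by auto
  moreover have "int n dvd (y + int j) mod int n - (y + int j)"
    by (simp only: mod_eq_dvd_iff[symmetric]) simp
  ultimately have "int n dvd (y - w - r * int j) + ((y + int j) mod int n - (y + int j))"
    by (rule dvd_add)
  then have "int n dvd (y + int j) mod int n - w - (r + 1) * int j" by (simp add: algebra_simps)
  then show "inCo w ((y + int j) mod int n)" unfolding inCo_def by blast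
qed

lemma inCo_trans: "inCo w y \<Longrightarrow> inCo w' y \<Longrightarrow> inCo w w'"
proof -
  assume "inCo w y" "inCo w' y"
  then obtain r r' where "int n dvd (y - w - r * int j)" "int n dvd (y - w' - r' * int j)"
    unfolding inCo_def by auto
  then have "int n dvd (y - w - r * int j) - (y - w' - r' * int j)" by (rule dvd_diff)
  then have "int n dvd w' - w - (r - r') * int j" by (simp add: algebra_simps)
  then show "inCo w w'" unfolding inCo_def by blast
qed

lemma inCo_add: "inCo w (y + int r * int j) \<longleftrightarrow> inCo w y"
proof
  assume "inCo w (y + int r * int j)"
  then obtain s where "int n dvd (y + int r * int j - w - s * int j)" unfolding inCo_def by auto
  then have "int n dvd y - w - (s - int r) * int j" by (simp add: algebra_simps)
  then show "inCo w y" unfolding inCo_def by blast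
next
  assume "inCo w y"
  then obtain s where "int n dvd (y - w - s * int j)" unfolding inCo_def by auto
  then have "int n dvd y + int r * int j - w - (s + int r) * int j" by (simp add: algebra_simps)
  then show "inCo w (y + int r * int j)" unfolding inCo_def by blast
qed

lemma inCo_self: "inCo w w" unfolding inCo_def by (rule exI[of _ 0]) simp

lemma a_inCo: "inCo b a" unfolding inCo_def b_def by (rule exI[of _ "-1"]) simp

lemma nd_out: "\<not> inCo b y \<Longrightarrow> ed y j \<notin> E'"
proof
  assume h: "\<not> inCo b y" "ed y j \<in> E'"
  then have "ed (y mod int n) j \<in> E'" by (simp add: ed_mod)
  then have "y mod int n \<in> Dl j" unfolding Dl_def using npos by auto
  then have "y mod int n = a" using Dla by auto
  moreover have "a mod int n = a" using a_range by simp
  ultimately have "y mod int n = a mod int n" by simp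
  then have "int n dvd y - a" by (simp only: mod_eq_dvd_iff)
  then have "int n dvd y - b - (-1) * int j" by (simp add: b_def)
  then show False using h(1) unfolding inCo_def by blast
qed

lemma nd_pt: "r + 1 < c \<Longrightarrow> ed (pt r) j \<notin> E'"
proof
  assume h: "r + 1 < c" "ed (pt r) j \<in> E'"
  then have "ed (pt r mod int n) j \<in> E'" by (simp add: ed_mod)
  then have "pt r mod int n \<in> Dl j" unfolding Dl_def using npos by auto
  then have "pt r mod int n = a" using Dla by auto
  moreover have "a mod int n = a" using a_range by simp
  ultimately have "pt r mod int n = a mod int n" by simp
  then have "int n dvd pt r - a" by (simp only: mod_eq_dvd_iff)
  then have "int n dvd (int r + 1) * int j" by (simp add: pt_def b_def algebra_simps)
  then have "int c dvd int r + 1" using key by blast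
  moreover have "\<bar>int r + 1\<bar> < int c" "int r + 1 \<noteq> 0" using h by auto
  ultimately show False using small_dvd by blast
qed

lemma cons_pt: "r + 1 < c \<Longrightarrow> 1 \<le> F (pt r) + F (pt (r+1))"
proof -
  assume "r + 1 < c"
  then have "1 \<le> F (pt r) + F (pt r + int j)" using pair[OF j1 jd nd_pt] by blast
  moreover have "pt r + int j = pt (r+1)" by (simp add: pt_def algebra_simps)
  ultimately show ?thesis by simp
qed

lemma total: "(\<Sum>x\<in>{0..<int n}. F x) < real n / 2" using small sumF by simp

lemma rest_sum:
  assumes "B \<subseteq> {0..<int n}" "\<And>y. y \<in> {0..<int n} \<Longrightarrow> y \<in> B \<longleftrightarrow> (y + int j) mod int n \<in> B"
    and "\<And>y. y \<in> {0..<int n} - B \<Longrightarrow> ed y j \<notin> E'"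
  shows "2 * (\<Sum>y\<in>{0..<int n} - B. F y) \<ge> real n - real (card B)"
proof -
  have fB: "finite B" using assms(1) finite_subset by blast
  have "2 * (\<Sum>y\<in>{0..<int n} - B. F y) \<ge> real (card ({0..<int n} - B))"
  proof (rule closed_sum[OF _ _ _ j1 jd])
    show "{0..<int n} - B \<subseteq> {0..<int n}" by auto
    show "(y + int j) mod int n \<in> {0..<int n} - B" if y: "y \<in> {0..<int n} - B" for y
    proof -
      have "(y + int j) mod int n \<in> {0..<int n}" using npos by simp
      moreover have "(y + int j) mod int n \<notin> B" using assms(2)[of y] y by blast
      ultimately show ?thesis by blast
    qed
    show "\<And>y. y \<in> {0..<int n} - B \<Longrightarrow> ed y j \<notin> E'" by (rule assms(3))
  qed
  moreover have "card ({0..<int n} - B) = n - card B"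
    using card_Diff_subset[OF fB assms(1)] by simp
  moreover have "card B \<le> n" using card_mono[OF _ assms(1)] by simp
  ultimately show ?thesis by simp
qed

lemma fpm1:
  assumes "p < q" "q < c" "even p" "even q" "1 \<le> F (pt p) + F (pt q)"
  shows False
proof -
  have s1: "2 * (\<Sum>r<c. F (pt r)) \<ge> real c"
    by (rule seq_chord[OF c_odd assms(1-4)]) (use cons_pt assms(5) in auto)
  have s2: "2 * (\<Sum>y\<in>{0..<int n} - Co b. F y) \<ge> real n - real (card (Co b))"
  proof (rule rest_sum[OF Co_sub])
    show "\<And>y. y \<in> {0..<int n} \<Longrightarrow> y \<in> Co b \<longleftrightarrow> (y + int j) mod int n \<in> Co b"
      using inCo_shift npos by (auto simp: Co_def)
    show "\<And>y. y \<in> {0..<int n} - Co b \<Longrightarrow> ed y j \<notin> E'" using nd_out by (auto simp: Co_def)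
  qed
  have "(\<Sum>x\<in>{0..<int n}. F x) = (\<Sum>y\<in>{0..<int n} - Co b. F y) + (\<Sum>y\<in>Co b. F y)"
    by (rule sum.subset_diff[OF Co_sub]) simp
  moreover have "(\<Sum>y\<in>Co b. F y) = (\<Sum>r<c. F (pt r))" unfolding Co_sum pt_def by simp
  ultimately show False using s1 s2 total Co_card by simp
qed

lemma fpm2:
  assumes "p < c" "even p" "\<not> inCo b z" "1 \<le> F (pt p) + F z"
  shows False
proof -
  have s1: "2 * (\<Sum>r<c. F (pt r)) \<ge> real c - 1 + 2 * F (pt p)"
    by (rule seq_single[OF c_odd assms(1,2)]) (use cons_pt in auto)
  have consz: "1 \<le> F (z + int r * int j) + F (z + int (r+1) * int j)" for r
  proof -
    have "\<not> inCo b (z + int r * int j)" using assms(3) inCo_add by blast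
    then have "1 \<le> F (z + int r * int j) + F (z + int r * int j + int j)"
      using pair[OF j1 jd nd_out] by blast
    then show ?thesis by (simp add: algebra_simps)
  qed
  have s2: "2 * (\<Sum>r<c. F (z + int r * int j)) \<ge> real c - 1 + 2 * F (z + int 0 * int j)"
    by (rule seq_single[OF c_odd]) (use consz c_pos in auto)
  have disj: "Co b \<inter> Co z = {}"
    using assms(3) inCo_trans by (auto simp: Co_def)
  have s3: "2 * (\<Sum>y\<in>{0..<int n} - (Co b \<union> Co z). F y) \<ge> real n - real (card (Co b \<union> Co z))"
  proof (rule rest_sum)
    show "Co b \<union> Co z \<subseteq> {0..<int n}" using Co_sub by auto
    show "\<And>y. y \<in> {0..<int n} \<Longrightarrow> y \<in> Co b \<union> Co z \<longleftrightarrow> (y + int j) mod int n \<in> Co b \<union> Co z"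
      using inCo_shift npos by (auto simp: Co_def)
    show "\<And>y. y \<in> {0..<int n} - (Co b \<union> Co z) \<Longrightarrow> ed y j \<notin> E'" using nd_out by (auto simp: Co_def)
  qed
  have fin: "finite (Co w)" for w by (rule finite_subset[OF Co_sub]) simp
  have cu: "card (Co b \<union> Co z) = 2 * c"
    using card_Un_disjoint[OF fin fin disj] Co_card by simp
  have sub: "Co b \<union> Co z \<subseteq> {0..<int n}" using Co_sub by auto
  have "(\<Sum>x\<in>{0..<int n}. F x) = (\<Sum>y\<in>{0..<int n} - (Co b \<union> Co z). F y) + (\<Sum>y\<in>Co b \<union> Co z. F y)"
    by (rule sum.subset_diff[OF sub]) simp
  moreover have "(\<Sum>y\<in>Co b \<union> Co z. F y) = (\<Sum>y\<in>Co b. F y) + (\<Sum>y\<in>Co z. F y)"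
    by (rule sum.union_disjoint[OF fin fin disj])
  moreover have "(\<Sum>y\<in>Co b. F y) = (\<Sum>r<c. F (pt r))" unfolding Co_sum pt_def by simp
  moreover have "(\<Sum>y\<in>Co z. F y) = (\<Sum>r<c. F (z + int r * int j))" by (rule Co_sum)
  ultimately show False using s1 s2 s3 total cu assms(4) by simp
qed

end



context cj
begin

lemma in_Dl: "ed x l \<in> E' \<Longrightarrow> x mod int n \<in> Dl l"
  unfolding Dl_def using npos by (simp add: ed_mod)

lemma modne: "\<not> int n dvd (x - y) \<Longrightarrow> x mod int n \<noteq> y mod int n"
  by (simp add: mod_eq_dvd_iff)

lemma pt_ne: "p < c \<Longrightarrow> p' < c \<Longrightarrow> p \<noteq> p' \<Longrightarrow> \<not> int n dvd (pt p - pt p')"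
proof
  assume "p < c" "p' < c" "p \<noteq> p'" "int n dvd (pt p - pt p')"
  then have "int c dvd int p - int p'" using pt_cong by blast
  moreover have "\<bar>int p - int p'\<bar> < int c" using \<open>p < c\<close> \<open>p' < c\<close> by auto
  ultimately show False using small_dvd \<open>p \<noteq> p'\<close> by fastforce
qed

lemma mem_plus_in:
  assumes l: "1 \<le> l" "l \<le> d" and pq: "p < q" "q < c" "even p" "even q"
    and cong: "int n dvd pt q - (pt p + int l)"
  shows "ed (pt p) l \<in> E'"
proof (rule ccontr)
  assume "ed (pt p) l \<notin> E'"
  then have "1 \<le> F (pt p) + F (pt p + int l)" using pair[OF l] by blast
  moreover have "F (pt p + int l) = F (pt q)"
    by (rule F_cong) (use cong in \<open>simp add: mod_eq_dvd_iff dvd_diff_commute\<close>)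
  ultimately show False using fpm1[OF pq] by simp
qed

lemma mem_minus_in:
  assumes l: "1 \<le> l" "l \<le> d" and pq: "p < q" "q < c" "even p" "even q"
    and cong: "int n dvd pt q - (pt p - int l)"
  shows "ed (pt p - int l) l \<in> E'"
proof (rule ccontr)
  assume "ed (pt p - int l) l \<notin> E'"
  then have "1 \<le> F (pt p - int l) + F (pt p - int l + int l)" using pair[OF l] by blast
  moreover have "F (pt p - int l) = F (pt q)"
    by (rule F_cong) (use cong in \<open>simp add: mod_eq_dvd_iff dvd_diff_commute\<close>)
  ultimately show False using fpm1[OF pq] by simp
qed

lemma mem_plus_out:
  assumes l: "1 \<le> l" "l \<le> d" and p: "p < c" "even p" and out: "\<not> inCo b (pt p + int l)"
  shows "ed (pt p) l \<in> E'"
proof (rule ccontr)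
  assume "ed (pt p) l \<notin> E'"
  then have "1 \<le> F (pt p) + F (pt p + int l)" using pair[OF l] by blast
  then show False using fpm2[OF p out] by simp
qed

lemma mem_minus_out:
  assumes l: "1 \<le> l" "l \<le> d" and p: "p < c" "even p" and out: "\<not> inCo b (pt p - int l)"
  shows "ed (pt p - int l) l \<in> E'"
proof (rule ccontr)
  assume "ed (pt p - int l) l \<notin> E'"
  then have "1 \<le> F (pt p - int l) + F (pt p - int l + int l)" using pair[OF l] by blast
  then show False using fpm2[OF p out] by (simp add: add.commute)
qed

lemma card3:
  assumes "x1 \<in> A" "x2 \<in> A" "x3 \<in> A" "x1 \<noteq> x2" "x1 \<noteq> x3" "x2 \<noteq> x3" "finite A"
  shows "3 \<le> card A"
proof -
  have "card {x1, x2, x3} = 3" using assms by simp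
  moreover have "card {x1, x2, x3} \<le> card A" using assms by (intro card_mono) auto
  ultimately show ?thesis by simp
qed

lemma card2:
  assumes "x1 \<in> A" "x2 \<in> A" "x1 \<noteq> x2" "finite A"
  shows "2 \<le> card A"
proof -
  have "card {x1, x2} = 2" using assms by simp
  moreover have "card {x1, x2} \<le> card A" using assms by (intro card_mono) auto
  ultimately show ?thesis by simp
qed

lemma ln: "1 \<le> l \<Longrightarrow> l \<le> d \<Longrightarrow> \<not> int n dvd int l"
proof
  assume "1 \<le> l" "l \<le> d" "int n dvd int l"
  moreover have "\<bar>int l\<bar> < int n" using \<open>l \<le> d\<close> dn by simp
  ultimately show False using int_dvd_small by fastforce
qed

lemma count_out:
  assumes l: "1 \<le> l" "l \<le> d" and out: "\<not> inCo b (b + int l)"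
  shows "3 \<le> card (Dl l)"
proof -
  have o1: "\<not> inCo b (pt p + int l)" for p
  proof
    assume "inCo b (pt p + int l)"
    then obtain r where "int n dvd pt p + int l - b - r * int j" unfolding inCo_def by auto
    then have "int n dvd (b + int l) - b - (r - int p) * int j" by (simp add: pt_def algebra_simps)
    then show False using out unfolding inCo_def by blast
  qed
  have o2: "\<not> inCo b (pt p - int l)" for p
  proof
    assume "inCo b (pt p - int l)"
    then obtain r where "int n dvd pt p - int l - b - r * int j" unfolding inCo_def by auto
    then have "int n dvd - (pt p - int l - b - r * int j)" by (simp only: dvd_minus_iff)
    then have "int n dvd (b + int l) - b - (int p - r) * int j" by (simp add: pt_def algebra_simps)
    then show False using out unfolding inCo_def by blast
  qed
  have c3: "0 < c" "2 < c" using c_ge3 by auto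
  have m1: "pt 0 mod int n \<in> Dl l" by (rule in_Dl, rule mem_plus_out[OF l c3(1) _ o1]) simp
  have m2: "(pt 0 - int l) mod int n \<in> Dl l" by (rule in_Dl, rule mem_minus_out[OF l c3(1) _ o2]) simp
  have m3: "pt 2 mod int n \<in> Dl l" by (rule in_Dl, rule mem_plus_out[OF l c3(2) _ o1]) simp
  have d12: "pt 0 mod int n \<noteq> (pt 0 - int l) mod int n"
    by (rule modne) (use ln[OF l] in simp)
  have d13: "pt 0 mod int n \<noteq> pt 2 mod int n"
    by (rule modne, rule pt_ne) (use c3 in auto)
  have d23: "(pt 0 - int l) mod int n \<noteq> pt 2 mod int n"
  proof (rule modne)
    show "\<not> int n dvd pt 0 - int l - pt 2"
    proof
      assume "int n dvd pt 0 - int l - pt 2"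
      then have "int n dvd - (pt 0 - int l - pt 2)" by (simp only: dvd_minus_iff)
      then have "int n dvd (b + int l) - b - (-2) * int j" by (simp add: pt_def algebra_simps)
      then show False using out unfolding inCo_def by blast
    qed
  qed
  show ?thesis by (rule card3[OF m1 m2 m3 d12 d13 d23 Dl_fin])
qed


lemma count_in:
  assumes l: "1 \<le> l" "l \<le> d" and lj: "l \<noteq> j" and inn: "inCo b (b + int l)"
  shows "2 \<le> card (Dl l) \<and> ((\<not> int n dvd (int l - 3 * int j) \<and> \<not> int n dvd (int l + 3 * int j)) \<longrightarrow> 3 \<le> card (Dl l))"
proof -
  obtain r0 where "int n dvd (b + int l) - b - r0 * int j" using inn unfolding inCo_def by auto
  then have r0: "int n dvd int l - r0 * int j" by simp
  define s where "s = nat (r0 mod int c)"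
  have sc: "s < c" unfolding s_def using c_pos by (simp add: nat_less_iff)
  have "int c dvd (r0 - int s)" unfolding s_def using c_pos
    by (simp add: mod_eq_dvd_iff[symmetric])
  then have "int n dvd (r0 - int s) * int j" using key by blast
  then have "int n dvd (int l - r0 * int j) + (r0 - int s) * int j" by (rule dvd_add[OF r0])
  then have hs: "int n dvd int l - int s * int j" by (simp add: algebra_simps)
  have cj: "int n dvd int c * int j" by (rule cj0)
  have ljn: "\<bar>int l - int j\<bar> < int n" "\<bar>int l + int j\<bar> < int n" using l jd dn by auto
  have s0: "s \<noteq> 0"
  proof
    assume "s = 0"
    then have "int n dvd int l" using hs by simp
    then show False using ln[OF l] by blast
  qed
  have s1: "s \<noteq> 1"
  proof
    assume "s = 1"
    then have "int n dvd int l - int j" using hs by simp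
    then have "int l - int j = 0" using int_dvd_small ljn by blast
    then show False using lj by simp
  qed
  have sc1: "s \<noteq> c - 1"
  proof
    assume "s = c - 1"
    then have "int s = int c - 1" using c_pos by simp
    then have "int n dvd int l - (int c - 1) * int j" using hs by simp
    then have "int n dvd (int l - (int c - 1) * int j) + int c * int j" using cj by (rule dvd_add)
    then have "int n dvd int l + int j" by (simp add: algebra_simps)
    then have "int l + int j = 0" using int_dvd_small ljn by blast
    then show False using l by simp
  qed
  have c3: "3 \<le> c" "odd c" by (rule c_ge3, rule c_odd)
  show ?thesis
  proof (cases "even s")
    case True
    have sle: "s + 3 \<le> c" using True sc sc1 c3 s0 by presburger
    have m: "pt p mod int n \<in> Dl l" if "p + s < c" "even p" for p
    proof (rule in_Dl, rule mem_plus_in[OF l])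
      show "p < p + s" using s0 by simp
      show "p + s < c" "even p" by (rule that(1), rule that(2))
      show "even (p + s)" using that(2) True by simp
      have "pt (p + s) - (pt p + int l) = - (int l - int s * int j)" by (simp add: pt_def algebra_simps)
      then show "int n dvd pt (p + s) - (pt p + int l)" using hs by (simp only: dvd_minus_iff)
    qed
    have m0: "pt 0 mod int n \<in> Dl l" using m[of 0] sle by simp
    have m2: "pt 2 mod int n \<in> Dl l" using m[of 2] sle by simp
    have d02: "pt 0 mod int n \<noteq> pt 2 mod int n" by (rule modne, rule pt_ne) (use c3 in auto)
    have two: "2 \<le> card (Dl l)" by (rule card2[OF m0 m2 d02 Dl_fin])
    have three: "3 \<le> card (Dl l)" if h3: "\<not> int n dvd (int l + 3 * int j)"
    proof -
      have "s \<noteq> c - 3"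
      proof
        assume "s = c - 3"
        then have "int s = int c - 3" using c3 by simp
        then have "int n dvd int l - (int c - 3) * int j" using hs by simp
        then have "int n dvd (int l - (int c - 3) * int j) + int c * int j" using cj by (rule dvd_add)
        then have "int n dvd int l + 3 * int j" by (simp add: algebra_simps)
        then show False using h3 by simp
      qed
      then have sle5: "s + 5 \<le> c" using True sc sc1 c3 s0 sle by presburger
      have m4: "pt 4 mod int n \<in> Dl l" using m[of 4] sle5 by simp
      have d04: "pt 0 mod int n \<noteq> pt 4 mod int n" by (rule modne, rule pt_ne) (use sle5 in auto)
      have d24: "pt 2 mod int n \<noteq> pt 4 mod int n" by (rule modne, rule pt_ne) (use sle5 in auto)
      show ?thesis by (rule card3[OF m0 m2 m4 d02 d04 d24 Dl_fin])
    qed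
    show ?thesis using two three by blast
  next
    case False
    have s3: "3 \<le> s" using False s0 s1 by presburger
    have ev: "even (c - s)" using False c3 sc by simp
    have m: "(pt p - int l) mod int n \<in> Dl l" if "p + (c - s) < c" "even p" for p
    proof (rule in_Dl, rule mem_minus_in[OF l])
      show "p < p + (c - s)" using sc by simp
      show "p + (c - s) < c" "even p" by (rule that(1), rule that(2))
      show "even (p + (c - s))" using that(2) ev by simp
      have "int (c - s) = int c - int s" using sc by simp
      then have "pt (p + (c - s)) - (pt p - int l) = (int l - int s * int j) + int c * int j"
        by (simp add: pt_def algebra_simps)
      moreover have "int n dvd (int l - int s * int j) + int c * int j" by (rule dvd_add[OF hs cj])
      ultimately show "int n dvd pt (p + (c - s)) - (pt p - int l)" by metis
    qed
    have mdn: "(pt p - int l) mod int n \<noteq> (pt p' - int l) mod int n" if "p < c" "p' < c" "p \<noteq> p'" for p p'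
      by (rule modne) (use pt_ne[OF that] in simp)
    have m0: "(pt 0 - int l) mod int n \<in> Dl l" using m[of 0] s3 sc by simp
    have m2: "(pt 2 - int l) mod int n \<in> Dl l" using m[of 2] s3 sc by simp
    have d02: "(pt 0 - int l) mod int n \<noteq> (pt 2 - int l) mod int n" by (rule mdn) (use c3 in auto)
    have two: "2 \<le> card (Dl l)" by (rule card2[OF m0 m2 d02 Dl_fin])
    have three: "3 \<le> card (Dl l)" if h3: "\<not> int n dvd (int l - 3 * int j)"
    proof -
      have "s \<noteq> 3" using h3 hs by auto
      then have s5: "5 \<le> s" using s3 False by presburger
      have m4: "(pt 4 - int l) mod int n \<in> Dl l" using m[of 4] s5 sc by simp
      have d04: "(pt 0 - int l) mod int n \<noteq> (pt 4 - int l) mod int n" by (rule mdn) (use s5 sc in auto)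
      have d24: "(pt 2 - int l) mod int n \<noteq> (pt 4 - int l) mod int n" by (rule mdn) (use s5 sc in auto)
      show ?thesis by (rule card3[OF m0 m2 m4 d02 d04 d24 Dl_fin])
    qed
    show ?thesis using two three by blast
  qed
qed

end



lemma bad_unique:
  fixes n d j l1 l2 :: nat
  assumes "2*d < n" "1 \<le> l1" "l1 \<le> d" "1 \<le> l2" "l2 \<le> d"
    and b1: "int n dvd (int l1 - 3 * int j) \<or> int n dvd (int l1 + 3 * int j)"
    and b2: "int n dvd (int l2 - 3 * int j) \<or> int n dvd (int l2 + 3 * int j)"
  shows "l1 = l2"
proof -
  have s1: "\<bar>int l1 - int l2\<bar> < int n" and s2: "\<bar>int l1 + int l2\<bar> < int n" "int l1 + int l2 \<noteq> 0"
    using assms by auto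
  consider "int n dvd int l1 - int l2" | "int n dvd int l1 + int l2"
  proof -
    from b1 b2 consider
        "int n dvd (int l1 - 3 * int j)" "int n dvd (int l2 - 3 * int j)"
      | "int n dvd (int l1 - 3 * int j)" "int n dvd (int l2 + 3 * int j)"
      | "int n dvd (int l1 + 3 * int j)" "int n dvd (int l2 - 3 * int j)"
      | "int n dvd (int l1 + 3 * int j)" "int n dvd (int l2 + 3 * int j)" by blast
    then show ?thesis
    proof cases
      case 1 then have "int n dvd (int l1 - 3 * int j) - (int l2 - 3 * int j)" by (rule dvd_diff)
      then show ?thesis using that by simp
    next
      case 2 then have "int n dvd (int l1 - 3 * int j) + (int l2 + 3 * int j)" by (rule dvd_add)
      then show ?thesis using that by simp
    next
      case 3 then have "int n dvd (int l1 + 3 * int j) + (int l2 - 3 * int j)" by (rule dvd_add)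
      then show ?thesis using that by simp
    next
      case 4 then have "int n dvd (int l1 + 3 * int j) - (int l2 + 3 * int j)" by (rule dvd_diff)
      then show ?thesis using that by simp
    qed
  qed
  then show ?thesis
  proof cases
    case 1 then show ?thesis using int_dvd_small[OF 1 s1] by simp
  next
    case 2 then show ?thesis using int_dvd_small[OF 2 s2(1)] s2(2) by simp
  qed
qed

lemma exists_good:
  fixes n d j :: nat
  assumes "2*d < n" "9 \<le> n" "2 \<le> d" "1 \<le> j" "j \<le> d"
  shows "\<exists>l. 1 \<le> l \<and> l \<le> d \<and> l \<noteq> j \<and> \<not> int n dvd (int l - 3 * int j) \<and> \<not> int n dvd (int l + 3 * int j)"
proof (cases "d = 2")
  case True
  have sm: "\<not> int n dvd x" if "x \<noteq> 0" "\<bar>x\<bar> < int n" for x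
    using int_dvd_small that by blast
  show ?thesis
  proof (cases "j = 1")
    case True
    then show ?thesis using \<open>d = 2\<close> assms sm[of "-1"] sm[of 5]
      by (intro exI[of _ 2]) auto
  next
    case False
    then have "j = 2" using assms \<open>d = 2\<close> by simp
    then show ?thesis using \<open>d = 2\<close> assms sm[of "-5"] sm[of 7]
      by (intro exI[of _ 1]) auto
  qed
next
  case False
  then have d3: "3 \<le> d" using assms by simp
  obtain l1 l2 where l: "l1 \<in> {1,2,3}" "l2 \<in> {1,2,3}" "l1 \<noteq> l2" "l1 \<noteq> j" "l2 \<noteq> j"
  proof (cases "j = 1")
    case True then show ?thesis using that[of 2 3] by auto
  next
    case False
    show ?thesis
    proof (cases "j = 2")
      case True then show ?thesis using that[of 1 3] by auto
    next
      case False then show ?thesis using that[of 1 2] \<open>j \<noteq> 1\<close> by auto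
    qed
  qed
  have r: "1 \<le> l1" "l1 \<le> d" "1 \<le> l2" "l2 \<le> d" using l d3 by auto
  show ?thesis
  proof (rule ccontr)
    assume "\<not> ?thesis"
    then have "int n dvd (int l1 - 3 * int j) \<or> int n dvd (int l1 + 3 * int j)"
              "int n dvd (int l2 - 3 * int j) \<or> int n dvd (int l2 + 3 * int j)"
      using r l by blast+
    then have "l1 = l2" using bad_unique[OF assms(1) r] by blast
    then show False using l by simp
  qed
qed

locale circs = circ +
  assumes small: "(\<Sum>v\<in>{1..n}. f v) < real n / 2"
begin

lemma contra: False
proof -
  have sum_lt: "(\<Sum>l\<in>{1..d}. card (Dl l)) < 2 * d" using Dl_sum cardE by linarith
  obtain j where j: "1 \<le> j" "j \<le> d" "card (Dl j) \<le> 1"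
  proof (rule ccontr)
    assume "\<not> thesis"
    then have "\<forall>l\<in>{1..d}. 2 \<le> card (Dl l)" using that by force
    then have "(\<Sum>l\<in>{1..d}. (2::nat)) \<le> (\<Sum>l\<in>{1..d}. card (Dl l))" by (intro sum_mono) auto
    then show False using sum_lt by simp
  qed
  show False
  proof (cases "card (Dl j) = 0")
    case True
    then have D0: "Dl j = {}" using Dl_fin by simp
    have "2 * (\<Sum>y\<in>{0..<int n}. F y) \<ge> real (card {0..<int n})"
    proof (rule closed_sum[OF _ _ _ j(1,2)])
      show "{0..<int n} \<subseteq> {0..<int n}" by simp
      show "(y + int j) mod int n \<in> {0..<int n}" for y using npos by simp
      show "ed y j \<notin> E'" if "y \<in> {0..<int n}" for y using D0 that unfolding Dl_def by auto
    qed
    then show False using small sumF by simp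
  next
    case False
    then have "card (Dl j) = 1" using j by simp
    then obtain a where Da: "Dl j = {a}" by (rule card_1_singletonE)
    interpret cj n d E' f j a
      by unfold_locales (use j Da small in auto)
    obtain l0 where l0: "1 \<le> l0" "l0 \<le> d" "l0 \<noteq> j" "\<not> int n dvd (int l0 - 3 * int j)"
        "\<not> int n dvd (int l0 + 3 * int j)"
      using exists_good[OF dn n9 d2 j(1,2)] by blast
    have c2: "2 \<le> card (Dl l)" if "1 \<le> l" "l \<le> d" "l \<noteq> j" for l
    proof (cases "inCo b (b + int l)")
      case True then show ?thesis using count_in[OF that True] by blast
    next
      case False then show ?thesis using count_out[OF that(1,2) False] by simp
    qed
    have c3: "3 \<le> card (Dl l0)"
    proof (cases "inCo b (b + int l0)")
      case True then show ?thesis using count_in[OF l0(1-3) True] l0(4,5) by blast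
    next
      case False then show ?thesis using count_out[OF l0(1,2) False] by simp
    qed
    define w where "w l = (if l = j then 1 else if l = l0 then 3 else (2::nat))" for l
    have "(\<Sum>l\<in>{1..d}. w l) \<le> (\<Sum>l\<in>{1..d}. card (Dl l))"
    proof (rule sum_mono)
      fix l assume "l \<in> {1..d}"
      then show "w l \<le> card (Dl l)" unfolding w_def using Da c2 c3 by auto
    qed
    moreover have "(\<Sum>l\<in>{1..d}. w l) = 2 * d"
    proof -
      have e: "w l + (if l = j then 1 else 0) = 2 + (if l = l0 then 1 else 0)" for l
        unfolding w_def using l0(3) by auto
      have "(\<Sum>l\<in>{1..d}. w l + (if l = j then 1 else 0)) = (\<Sum>l\<in>{1..d}. 2 + (if l = l0 then 1 else (0::nat)))"
        using e by simp
      then have "(\<Sum>l\<in>{1..d}. w l) + (\<Sum>l\<in>{1..d}. (if l = j then 1 else (0::nat)))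
          = (\<Sum>l\<in>{1..d}. (2::nat)) + (\<Sum>l\<in>{1..d}. (if l = l0 then 1 else (0::nat)))"
        by (simp only: sum.distrib)
      moreover have "(\<Sum>l\<in>{1..d}. (if l = j then 1 else (0::nat))) = 1" using j by simp
      moreover have "(\<Sum>l\<in>{1..d}. (if l = l0 then 1 else (0::nat))) = 1" using l0 by simp
      ultimately show ?thesis by simp
    qed
    ultimately show False using sum_lt by simp
  qed
qed

end




lemma tau_ge:
  assumes "\<And>f. frac_vertex_cover V E f \<Longrightarrow> x \<le> (\<Sum>v\<in>V. f v)"
  shows "x \<le> tau_star V E"
  unfolding tau_star_def
proof (rule cInf_greatest)
  have "frac_vertex_cover V E (\<lambda>_. 1)" unfolding frac_vertex_cover_def by simp
  then show "{\<Sum>v\<in>V. f v |f. frac_vertex_cover V E f} \<noteq> {}" by blast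
  show "\<And>y. y \<in> {\<Sum>v\<in>V. f v |f. frac_vertex_cover V E f} \<Longrightarrow> x \<le> y" using assms by blast
qed

lemma tau_le:
  assumes "frac_vertex_cover V E f"
  shows "tau_star V E \<le> (\<Sum>v\<in>V. f v)"
  unfolding tau_star_def
proof (rule cInf_lower)
  show "(\<Sum>v\<in>V. f v) \<in> {\<Sum>v\<in>V. f v |f. frac_vertex_cover V E f}" using assms by blast
  show "bdd_below {\<Sum>v\<in>V. f v |f. frac_vertex_cover V E f}"
  proof (rule bdd_belowI[of _ 0])
    fix y assume "y \<in> {\<Sum>v\<in>V. f v |f. frac_vertex_cover V E f}"
    then obtain g where "y = (\<Sum>v\<in>V. g v)" "frac_vertex_cover V E g" by blast
    then show "0 \<le> y" unfolding frac_vertex_cover_def by (simp add: sum_nonneg)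
  qed
qed

lemma lower:
  fixes n d :: nat and E' :: "nat set set"
  assumes "odd n" "2 \<le> d" "2*d < n" "9 \<le> n" "finite E'" "card E' < 2*d"
  shows "real n / 2 \<le> tau_star {1..n} (circulant_edges (2*d) n - E')"
proof (rule tau_ge)
  fix f assume fc: "frac_vertex_cover {1..n} (circulant_edges (2*d) n - E') f"
  show "real n / 2 \<le> (\<Sum>v\<in>{1..n}. f v)"
  proof (rule ccontr)
    assume "\<not> ?thesis"
    then have sm: "(\<Sum>v\<in>{1..n}. f v) < real n / 2" by simp
    interpret circs n d E' f
    proof unfold_locales
      show "\<And>u v. {u, v} \<in> circulant_edges (2 * d) n \<Longrightarrow> {u, v} \<notin> E' \<Longrightarrow> 1 \<le> f u + f v"
        using fc unfolding frac_vertex_cover_def by blast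
    qed (use assms sm in auto)
    show False by (rule contra)
  qed
qed

definition star1 :: "nat \<Rightarrow> nat \<Rightarrow> nat set set" where
  "star1 k n = {e \<in> circulant_edges k n. 1 \<in> e}"

lemma star1_eq:
  fixes n d :: nat
  assumes "2*d < n"
  shows "star1 (2*d) n = (\<lambda>w. {1, w}) ` ({2..d+1} \<union> {n+1-d..n})"
proof
  show "star1 (2*d) n \<subseteq> (\<lambda>w. {1, w}) ` ({2..d+1} \<union> {n+1-d..n})"
  proof
    fix e assume "e \<in> star1 (2*d) n"
    then obtain i i' where e: "e = {i, i'}" "1 \<le> i" "i < i'" "i' \<le> n" "min (i' - i) (i + n - i') \<le> d" "1 \<in> e"
      unfolding star1_def circulant_edges_def by auto
    then have "i = 1" by auto
    then have "i' \<in> {2..d+1} \<union> {n+1-d..n}" using e by auto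
    then show "e \<in> (\<lambda>w. {1, w}) ` ({2..d+1} \<union> {n+1-d..n})" using e \<open>i = 1\<close> by auto
  qed
next
  show "(\<lambda>w. {1, w}) ` ({2..d+1} \<union> {n+1-d..n}) \<subseteq> star1 (2*d) n"
  proof
    fix e assume "e \<in> (\<lambda>w. {1, w}) ` ({2..d+1} \<union> {n+1-d..n})"
    then obtain w where w: "e = {1, w}" "w \<in> {2..d+1} \<union> {n+1-d..n}" by auto
    have "e \<in> circulant_edges (2*d) n"
      unfolding circulant_edges_def using w assms
      by (intro CollectI exI[of _ 1] exI[of _ w]) auto
    then show "e \<in> star1 (2*d) n" unfolding star1_def using w by auto
  qed
qed

lemma star1_card:
  fixes n d :: nat
  assumes "2*d < n" "1 \<le> d"
  shows "card (star1 (2*d) n) = 2*d"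
proof -
  have inj: "inj_on (\<lambda>w. {1, w}) ({2..d+1} \<union> {n+1-d..n})"
    by (rule inj_onI) (auto simp: doubleton_eq_iff)
  have "card ({2..d+1} \<union> {n+1-d..n}) = card {2..d+1} + card {n+1-d..n}"
    by (rule card_Un_disjoint) (use assms in auto)
  also have "\<dots> = 2*d" using assms by simp
  finally show ?thesis unfolding star1_eq[OF assms(1)] using card_image[OF inj] by simp
qed

lemma upper:
  fixes n d :: nat
  assumes "2*d < n" "1 \<le> d"
  shows "tau_star {1..n} (circulant_edges (2*d) n - star1 (2*d) n) < real n / 2"
proof -
  define g where "g v = (if v = 1 then 0 else 1/2 :: real)" for v :: nat
  have "frac_vertex_cover {1..n} (circulant_edges (2*d) n - star1 (2*d) n) g"
    unfolding frac_vertex_cover_def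
  proof
    show "\<forall>v\<in>{1..n}. 0 \<le> g v" by (simp add: g_def)
    show "\<forall>u v. {u, v} \<in> circulant_edges (2 * d) n - star1 (2 * d) n \<longrightarrow> 1 \<le> g u + g v"
      unfolding star1_def g_def by auto
  qed
  then have "tau_star {1..n} (circulant_edges (2*d) n - star1 (2*d) n) \<le> (\<Sum>v\<in>{1..n}. g v)"
    by (rule tau_le)
  moreover have "(\<Sum>v\<in>{1..n}. g v) = (real n - 1) / 2"
  proof -
    have "{1..n} = insert 1 {2..n}" using assms by auto
    then have "(\<Sum>v\<in>{1..n}. g v) = g 1 + (\<Sum>v\<in>{2..n}. g v)" by simp
    also have "(\<Sum>v\<in>{2..n}. g v) = (\<Sum>v\<in>{2..n}. 1/2)" by (rule sum.cong) (auto simp: g_def)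
    finally show ?thesis using assms by (simp add: g_def of_nat_diff)
  qed
  ultimately show ?thesis by simp
qed

theorem theorem31:
  fixes n k :: nat
  assumes "n \<ge> 9" and "odd n" and "even k" and "4 \<le> k" and "k < n"
  shows "mu {1..n} (circulant_edges k n) = k"
proof -
  define d where "d = k div 2"
  have kd: "k = 2*d" using assms(3) unfolding d_def by simp
  have d2: "2 \<le> d" and dn: "2*d < n" using assms kd by auto
  have fin: "finite (circulant_edges k n)"
  proof (rule finite_subset[of _ "Pow {1..n}"])
    show "circulant_edges k n \<subseteq> Pow {1..n}" unfolding circulant_edges_def by auto
  qed simp
  show ?thesis
    unfolding mu_def
  proof (rule Least_equality)
    show "\<exists>E'. E' \<subseteq> circulant_edges k n \<and> card E' = k \<and>
        tau_star {1..n} (circulant_edges k n - E') < real (card {1..n}) / 2"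
      using upper[OF dn] star1_card[OF dn] d2 unfolding kd by (intro exI[of _ "star1 (2*d) n"]) (auto simp: star1_def)
  next
    fix m assume "\<exists>E'. E' \<subseteq> circulant_edges k n \<and> card E' = m \<and>
        tau_star {1..n} (circulant_edges k n - E') < real (card {1..n}) / 2"
    then obtain E' where E': "E' \<subseteq> circulant_edges k n" "card E' = m"
        "tau_star {1..n} (circulant_edges k n - E') < real n / 2" by auto
    show "k \<le> m"
    proof (rule ccontr)
      assume "\<not> k \<le> m"
      then have "card E' < 2*d" using E' kd by simp
      moreover have "finite E'" using E'(1) fin finite_subset by blast
      ultimately have "real n / 2 \<le> tau_star {1..n} (circulant_edges (2*d) n - E')"
        using lower[OF assms(2) d2 dn assms(1)] by blast
      then show False using E'(3) kd by simp
    qed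
  qed
qed


end
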